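(* Quet's sequence $A$ is a permutation of $\mathbb{N}$; that is, $A:\mathbb{N}\to\mathbb{N}$ is a bijection.
   Context: $\mathbb{N}=\{0,1,2,\dots\}$. Quet's sequence $A:\mathbb{N}\to\mathbb{N}$ is defined by $A(0)=0$, $A(1)=1$, and for $n\ge1$, $A(n+1)$ is the least natural number such that $A(n+1)\notin\{A(0),\dots,A(n)\}$ and $\sum_{0\le i\le n+1}A(i)\equiv 0 \pmod{n}$. First values: $A=0,1,2,3,6,4,9,5,12,14,7,17,8,20,\dots$. *)

theory Defs
  imports Main
begin

text \<open>quet_list n is the list [A 0, A 1, ..., A n] of Quet's sequence.
  For n \<ge> 1, A (n+1) is the least natural number not among A 0..A n
  such that A 0 + ... + A (n+1) is divisible by n.\<close>
fun quet_list :: "nat \<Rightarrow> nat list" where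
  "quet_list 0 = [0]"
| "quet_list (Suc 0) = [0, 1]"
| "quet_list (Suc (Suc m)) =
     (let xs = quet_list (Suc m)
      in xs @ [LEAST a. a \<notin> set xs \<and> (sum_list xs + a) mod (Suc m) = 0])"

definition quetA :: "nat \<Rightarrow> nat" where
  "quetA n = last (quet_list n)"

end

theory Submission
  imports Defs
begin

lemma ql_len: "length (quet_list k) = Suc k"
  by (induction k rule: quet_list.induct) (auto simp: Let_def)

lemma ql_snoc: "\<exists>x. quet_list (Suc k) = quet_list k @ [x]"
  by (cases k) (auto simp: Let_def)

lemma ql_nth: "i \<le> k \<Longrightarrow> quet_list k ! i = quetA i"
proof (induction k arbitrary: i)
  case 0 then show ?case by (simp add: quetA_def)
next
  case (Suc k)
  obtain x where x: "quet_list (Suc k) = quet_list k @ [x]" using ql_snoc by blast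
  show ?case
  proof (cases "i \<le> k")
    case True
    then show ?thesis using Suc x by (simp add: nth_append ql_len)
  next
    case False
    then have "i = Suc k" using Suc by simp
    then show ?thesis using x by (simp add: quetA_def nth_append ql_len)
  qed
qed

lemma ql_set: "set (quet_list k) = quetA ` {..k}"
proof -
  have "quet_list k = map (\<lambda>i. quet_list k ! i) [0..<Suc k]"
    using map_nth[of "quet_list k"] ql_len[of k] by simp
  then have "set (quet_list k) = (\<lambda>i. quet_list k ! i) ` {0..<Suc k}"
    by (metis set_map set_upt)
  also have "\<dots> = quetA ` {0..<Suc k}"
    by (rule image_cong) (auto intro: ql_nth)
  also have "{0..<Suc k} = {..k}" by auto
  finally show ?thesis .
qed

lemma least_ex: "\<exists>a. a \<notin> set xs \<and> (sum_list xs + a) mod (Suc m) = 0"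
proof -
  define s where "s = sum_list xs"
  define a where "a = m * s + Suc m * (s + 1)"
  have ge: "a \<ge> s + 1" unfolding a_def by simp
  have "\<forall>x\<in>set xs. x \<le> s" unfolding s_def using member_le_sum_list by blast
  then have na: "a \<notin> set xs" using ge by fastforce
  have eq: "s + a = Suc m * (s + s + 1)" unfolding a_def by (simp add: algebra_simps)
  have md: "(s + a) mod Suc m = 0" unfolding eq by (rule mod_mult_self1_is_0)
  show ?thesis
  proof (intro exI[of _ a] conjI)
    show "a \<notin> set xs" by (fact na)
    show "(sum_list xs + a) mod Suc m = 0" using md by (simp only: s_def)
  qed
qed

lemma ql_distinct: "distinct (quet_list k)"
proof (induction k rule: quet_list.induct)
  case 1 then show ?case by simp
next
  case 2 then show ?case by simp
next
  case (3 m)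
  let ?xs = "quet_list (Suc m)"
  have "(LEAST a. a \<notin> set ?xs \<and> (sum_list ?xs + a) mod Suc m = 0) \<notin> set ?xs"
    using LeastI_ex[OF least_ex[of ?xs m]] by blast
  then show ?case using 3 by (simp add: Let_def)
qed

definition qinv :: "nat \<Rightarrow> nat list \<Rightarrow> bool" where
  "qinv k xs \<longleftrightarrow> (\<exists>q. sum_list xs = (k-1)*q \<and> q < k \<and> (\<forall>x\<in>set xs. x < q+k)
      \<and> {..<q} \<subseteq> set xs \<and> k + 4 \<le> 2*q + (if q \<in> set xs then 1 else 0))"

lemma sucs: "Suc (Suc 0) = 2" "Suc 2 = 3" "Suc 3 = 4"
  by simp_all

lemma ql5: "quet_list 5 = [0,1,2,3,6,4]"
proof -
  have e2: "(LEAST a::nat. a \<notin> set [0,1] \<and> (sum_list [0,1] + a) mod Suc 0 = 0) = 2"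
    by (rule Least_equality) auto
  have q2: "quet_list (Suc (Suc 0)) = [0,1,2]"
    by (simp only: quet_list.simps Let_def e2) simp
  have e3: "(LEAST a::nat. a \<notin> set [0,1,2] \<and> (sum_list [0,1,2] + a) mod Suc (Suc 0) = 0) = 3"
    unfolding sucs by (rule Least_equality) auto
  have q3: "quet_list (Suc (Suc (Suc 0))) = [0,1,2,3]"
    by (subst quet_list.simps(3)) (simp only: Let_def q2 e3, simp)
  have e4: "(LEAST a::nat. a \<notin> set [0,1,2,3] \<and> (sum_list [0,1,2,3] + a) mod Suc (Suc (Suc 0)) = 0) = 6"
    unfolding sucs
  proof (rule Least_equality)
    fix y :: nat assume a: "y \<notin> set [0,1,2,3] \<and> (sum_list [0,1,2,3] + y) mod 3 = 0"
    show "6 \<le> y"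
    proof (rule ccontr)
      assume "\<not> 6 \<le> y"
      then have "y = 0 \<or> y = 1 \<or> y = 2 \<or> y = 3 \<or> y = 4 \<or> y = 5" by linarith
      then show False using a by auto
    qed
  qed auto
  have q4: "quet_list (Suc (Suc (Suc (Suc 0)))) = [0,1,2,3,6]"
    by (subst quet_list.simps(3)) (simp only: Let_def q3 e4, simp)
  have e5: "(LEAST a::nat. a \<notin> set [0,1,2,3,6] \<and> (sum_list [0,1,2,3,6] + a) mod Suc (Suc (Suc (Suc 0))) = 0) = 4"
    unfolding sucs
  proof (rule Least_equality)
    fix y :: nat assume a: "y \<notin> set [0,1,2,3,6] \<and> (sum_list [0,1,2,3,6] + y) mod 4 = 0"
    show "4 \<le> y"
    proof (rule ccontr)
      assume "\<not> 4 \<le> y"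
      then have "y = 0 \<or> y = 1 \<or> y = 2 \<or> y = 3" by linarith
      then show False using a by auto
    qed
  qed auto
  have q5: "quet_list (Suc (Suc (Suc (Suc (Suc 0))))) = [0,1,2,3,6,4]"
    by (subst quet_list.simps(3)) (simp only: Let_def q4 e5, simp)
  have five: "(5::nat) = Suc (Suc (Suc (Suc (Suc 0))))" by simp
  show ?thesis unfolding five by (rule q5)
qed

lemma qstep:
  assumes inv: "qinv (Suc m) xs"
  shows "qinv (Suc (Suc m)) (xs @ [LEAST a. a \<notin> set xs \<and> (sum_list xs + a) mod Suc m = 0])"
proof -
  let ?k = "Suc m"
  obtain q where s: "sum_list xs = m * q" and qk: "q < ?k" and bd: "\<forall>x\<in>set xs. x < q + ?k"
    and low: "{..<q} \<subseteq> set xs" and gr: "?k + 4 \<le> 2*q + (if q \<in> set xs then 1 else 0)"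
    using inv unfolding qinv_def by auto
  let ?P = "\<lambda>a. a \<notin> set xs \<and> (sum_list xs + a) mod Suc m = 0"
  show ?thesis
  proof (cases "q \<in> set xs")
    case False
    have "(LEAST a. ?P a) = q"
    proof (rule Least_equality)
      have "sum_list xs + q = Suc m * q" using s by simp
      then have "(sum_list xs + q) mod Suc m = 0" by (metis mod_mult_self1_is_0)
      then show "?P q" using False by simp
    next
      fix y assume "?P y"
      then show "q \<le> y" using low by (meson lessThan_iff not_le subsetD)
    qed
    moreover have "qinv (Suc ?k) (xs @ [q])"
      unfolding qinv_def
    proof (intro exI[of _ q] conjI)
      show "sum_list (xs @ [q]) = (Suc ?k - 1) * q" using s by simp
      show "q < Suc ?k" using qk by simp
      show "\<forall>x\<in>set (xs @ [q]). x < q + Suc ?k" using bd by auto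
      show "{..<q} \<subseteq> set (xs @ [q])" using low by auto
      show "Suc ?k + 4 \<le> 2*q + (if q \<in> set (xs @ [q]) then 1 else 0)" using gr False by simp
    qed
    ultimately show ?thesis by simp
  next
    case True
    have "(LEAST a. ?P a) = q + ?k"
    proof (rule Least_equality)
      have "sum_list xs + (q + ?k) = Suc m * (q + 1)" using s by simp
      then have "(sum_list xs + (q + ?k)) mod Suc m = 0" by (metis mod_mult_self1_is_0)
      then show "?P (q + ?k)" using bd by auto
    next
      fix y assume Py: "?P y"
      show "q + ?k \<le> y"
      proof (rule ccontr)
        assume "\<not> q + ?k \<le> y"
        then have y1: "y < q + ?k" by simp
        have "q \<le> y" using Py low by (meson lessThan_iff not_le subsetD)
        moreover have "y \<noteq> q" using Py True by auto
        ultimately have qy: "q < y" by simp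
        define d where "d = y - q"
        have d: "y = q + d" "0 < d" "d < ?k" using qy y1 unfolding d_def by simp_all
        have eq: "sum_list xs + y = d + ?k * q" using s d(1) by simp
        have "(sum_list xs + y) mod ?k = d"
          unfolding eq mod_mult_self2 using d(3) by (rule mod_less)
        then show False using Py d by simp
      qed
    qed
    moreover have "qinv (Suc ?k) (xs @ [q + ?k])"
      unfolding qinv_def
    proof (intro exI[of _ "q + 1"] conjI)
      show "sum_list (xs @ [q + ?k]) = (Suc ?k - 1) * (q + 1)" using s by simp
      show "q + 1 < Suc ?k" using qk by simp
      show "\<forall>x\<in>set (xs @ [q + ?k]). x < q + 1 + Suc ?k" using bd by auto
      show "{..<q + 1} \<subseteq> set (xs @ [q + ?k])" using low True by (auto simp: less_Suc_eq)
      show "Suc ?k + 4 \<le> 2*(q+1) + (if q + 1 \<in> set (xs @ [q + ?k]) then 1 else 0)" using gr True by simp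
    qed
    ultimately show ?thesis by simp
  qed
qed

lemma inv5: "qinv 5 (quet_list 5)"
proof -
  have "{..<4::nat} = {0,1,2,3}" by auto
  then show ?thesis unfolding qinv_def ql5 by (intro exI[of _ 4]) simp
qed

lemma inv_all: "5 \<le> k \<Longrightarrow> qinv k (quet_list k)"
proof (induction k rule: dec_induct)
  case base then show ?case by (rule inv5)
next
  case (step k)
  then obtain m where k: "k = Suc m" by (cases k) auto
  have IH: "qinv (Suc m) (quet_list (Suc m))" using step.IH k by simp
  show ?case unfolding k quet_list.simps(3) Let_def by (rule qstep[OF IH])
qed

theorem theorem9:
  shows "bij quetA"
proof (rule bijI)
  show "inj quetA"
  proof (rule injI)
    fix i j assume eq: "quetA i = quetA j"
    let ?k = "max i j"
    have "quet_list ?k ! i = quet_list ?k ! j" using eq ql_nth by simp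
    moreover have "i < length (quet_list ?k)" "j < length (quet_list ?k)" by (auto simp: ql_len)
    ultimately show "i = j" using nth_eq_iff_index_eq[OF ql_distinct[of ?k]] by blast
  qed
next
  show "surj quetA"
  proof (rule surjI)
    fix v
    let ?k = "2*(v::nat) + 5"
    have "qinv ?k (quet_list ?k)" by (rule inv_all) simp
    then obtain q where low: "{..<q} \<subseteq> set (quet_list ?k)" and gr: "?k + 4 \<le> 2*q + (if q \<in> set (quet_list ?k) then 1 else 0)"
      unfolding qinv_def by blast
    have "?k + 4 \<le> 2*q + 1" using gr by (cases "q \<in> set (quet_list ?k)") simp_all
    then have "v < q" by linarith
    then have "v \<in> set (quet_list ?k)" using low by blast
    then have "v \<in> quetA ` {..?k}" by (simp only: ql_set)
    then have "v \<in> range quetA" by blast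
    then show "quetA (inv quetA v) = v" by (rule f_inv_into_f)
  qed
qed

end
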